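(* Let $\Pi_n$ be a PARITY$_n$ program such that no rule $y\leftarrow B$ of $\Pi_n$ has $y\in var(B)$ and every rule body of $\Pi_n$ is consistent. Suppose $\Pi_n$ contains a rule $x\leftarrow B$ (with $x$ a variable) such that $not\ not\ x\in B$ and $S(B)=\{J\}$ for a single string $J$ which is odd. Let $\Pi_n'$ be obtained from $\Pi_n$ by replacing this rule with $x\leftarrow B\setminus\{not\ not\ x\}$. Then $Ans(\Pi_n')=$ PARITY$_n$.
   Context: A rule element is one of $\top$, $\bot$, $x$, $not\ x$, $not\ not\ x$, where $x$ is a variable. A (canonical) rule is $H\leftarrow B$ with $H$ a variable or $\bot$ and $B$ a finite set of rule elements; a canonical program is a finite set of rules. For a body $B$, $var(B)=\{e\in B: e\text{ is a variable}\}$. For a set of variables $I$: $I\models\top$; $I\not\models\bot$; $I\models x$ iff $I\models not\ not\ x$ iff $x\in I$; $I\models not\ x$ iff $x\notin I$; $I\models B$ iff $I$ satisfies every element of $B$; $I$ is closed under $H\leftarrow B$ if $I\models B$ implies $I\models H$. The reduct $\Pi^I$ replaces $not\ not\ x$ by $\top$ if $x\in I$ else $\bot$, and $not\ x$ by $\top$ if $x\notin I$ else $\bot$; $I$ is an answer set of $\Pi$ if $I$ is the least set closed under all rules of $\Pi^I$; $Ans(\Pi)$ is the set of answer sets; $var(\Pi)$ is the set of variables occurring in $\Pi$. Strings $w\in\{0,1\}^n$ are identified with $\{x_i:w_i=1\}$; PARITY$_n$ is the set of strings in $\{0,1\}^n$ with an odd number of 1's (odd strings; the others are even); a PARITY$_n$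 program is a canonical program $\Pi$ with $var(\Pi)=\{x_1,\dots,x_n\}$ and $Ans(\Pi)=$ PARITY$_n$. For a set $B$ of rule elements, $S(B)=\{I\subseteq\{x_1,\dots,x_n\}: I\models B\}$; $B$ is consistent if $S(B)\neq\emptyset$. *)

theory Defs
  imports Main
begin

text \<open>Variables x_1..x_n are represented by natural numbers 1..n.\<close>

datatype elem = ETop | EBot | EPos nat | ENot nat | ENotNot nat

datatype head = HVar nat | HBot

type_synonym rule = "head \<times> elem set"
type_synonym program = "rule set"

fun sat_elem :: "nat set \<Rightarrow> elem \<Rightarrow> bool" where
  "sat_elem I ETop = True"
| "sat_elem I EBot = False"
| "sat_elem I (EPos x) = (x \<in> I)"
| "sat_elem I (ENot x) = (x \<notin> I)"
| "sat_elem I (ENotNot x) = (x \<in> I)"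

definition sat_body :: "nat set \<Rightarrow> elem set \<Rightarrow> bool" where
  "sat_body I B = (\<forall>e\<in>B. sat_elem I e)"

fun sat_head :: "nat set \<Rightarrow> head \<Rightarrow> bool" where
  "sat_head I (HVar x) = (x \<in> I)"
| "sat_head I HBot = False"

definition closed_rule :: "nat set \<Rightarrow> rule \<Rightarrow> bool" where
  "closed_rule I r = (sat_body I (snd r) \<longrightarrow> sat_head I (fst r))"

definition closed_prog :: "nat set \<Rightarrow> program \<Rightarrow> bool" where
  "closed_prog I P = (\<forall>r\<in>P. closed_rule I r)"

fun reduct_elem :: "nat set \<Rightarrow> elem \<Rightarrow> elem" where
  "reduct_elem I (ENotNot x) = (if x \<in> I then ETop else EBot)"
| "reduct_elem I (ENot x) = (if x \<notin> I then ETop else EBot)"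
| "reduct_elem I e = e"

definition reduct :: "program \<Rightarrow> nat set \<Rightarrow> program" where
  "reduct P I = (\<lambda>(h, B). (h, reduct_elem I ` B)) ` P"

definition is_answer_set :: "program \<Rightarrow> nat set \<Rightarrow> bool" where
  "is_answer_set P I = (closed_prog I (reduct P I) \<and>
      (\<forall>J. closed_prog J (reduct P I) \<longrightarrow> I \<subseteq> J))"

definition Ans :: "program \<Rightarrow> nat set set" where
  "Ans P = {I. is_answer_set P I}"

fun elem_vars :: "elem \<Rightarrow> nat set" where
  "elem_vars (EPos x) = {x}"
| "elem_vars (ENot x) = {x}"
| "elem_vars (ENotNot x) = {x}"
| "elem_vars _ = {}"

fun head_vars :: "head \<Rightarrow> nat set" where
  "head_vars (HVar x) = {x}"
| "head_vars HBot = {}"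

definition prog_vars :: "program \<Rightarrow> nat set" where
  "prog_vars P = (\<Union>(h, B)\<in>P. head_vars h \<union> (\<Union>e\<in>B. elem_vars e))"

text \<open>var(B): the variables occurring positively (as plain elements) in B.\<close>
definition body_var :: "elem set \<Rightarrow> nat set" where
  "body_var B = {x. EPos x \<in> B}"

definition canonical_program :: "program \<Rightarrow> bool" where
  "canonical_program P = (finite P \<and> (\<forall>r\<in>P. finite (snd r)))"

definition PARITY :: "nat \<Rightarrow> nat set set" where
  "PARITY n = {I. I \<subseteq> {1..n} \<and> odd (card I)}"

definition parity_program :: "nat \<Rightarrow> program \<Rightarrow> bool" where
  "parity_program n P = (canonical_program P \<and> prog_vars P = {1..n} \<and> Ans P = PARITY n)"

definition S :: "nat \<Rightarrow> elem set \<Rightarrow> nat set set" where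
  "S n B = {I. I \<subseteq> {1..n} \<and> sat_body I B}"

definition consistent :: "nat \<Rightarrow> elem set \<Rightarrow> bool" where
  "consistent n B = (S n B \<noteq> {})"

end

theory Submission
  imports Defs
begin

lemma L1: "closed_prog K (reduct Q I) \<longleftrightarrow>
  (\<forall>h C. (h,C)\<in>Q \<longrightarrow> sat_body K (reduct_elem I ` C) \<longrightarrow> sat_head K h)"
  unfolding closed_prog_def reduct_def closed_rule_def by auto

lemma elem_red: "sat_elem I (reduct_elem I e) = sat_elem I e"
  by (cases e) auto

lemma L2: "sat_body I (reduct_elem I ` C) \<longleftrightarrow> sat_body I C"
  unfolding sat_body_def using elem_red by auto

lemma elem_mono: "K \<subseteq> K2 \<Longrightarrow> sat_elem K (reduct_elem I e) \<Longrightarrow> sat_elem K2 (reduct_elem I e)"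
  by (cases e) (auto split: if_splits)

lemma L3: "K \<subseteq> K2 \<Longrightarrow> sat_body K (reduct_elem I ` C) \<Longrightarrow> sat_body K2 (reduct_elem I ` C)"
  unfolding sat_body_def using elem_mono by blast

lemma head_int: "sat_head K h \<Longrightarrow> sat_head K2 h \<Longrightarrow> sat_head (K \<inter> K2) h"
  by (cases h) auto

lemma cl_int: "closed_prog K (reduct Q I) \<Longrightarrow> closed_prog K2 (reduct Q I) \<Longrightarrow>
  closed_prog (K \<inter> K2) (reduct Q I)"
  unfolding L1 by (meson L3 head_int inf_le1 inf_le2)

theorem mainTheorem11:
  fixes n :: nat and P :: program and x :: nat and B :: "elem set" and J :: "nat set"
  assumes "parity_program n P"
    and "\<forall>y C. (HVar y, C) \<in> P \<longrightarrow> y \<notin> body_var C"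
    and "\<forall>r\<in>P. consistent n (snd r)"
    and "(HVar x, B) \<in> P"
    and "ENotNot x \<in> B"
    and "S n B = {J}"
    and "odd (card J)"
  shows "Ans ((P - {(HVar x, B)}) \<union> {(HVar x, B - {ENotNot x})}) = PARITY n"
proof -
  define B' where "B' = B - {ENotNot x}"
  define P' where "P' = (P - {(HVar x, B)}) \<union> {(HVar x, B')}"
  define R where "R = P - {(HVar x, B)}"
  have AnsP: "Ans P = PARITY n" using assms(1) parity_program_def by blast
  have "x \<in> (case (HVar x, B) of (h, C) \<Rightarrow> head_vars h \<union> (\<Union>e\<in>C. elem_vars e))" by simp
  hence "x \<in> prog_vars P" unfolding prog_vars_def using assms(4) by blast
  hence xn: "x \<in> {1..n}" using assms(1) unfolding parity_program_def by blast
  have JS: "J \<subseteq> {1..n}" "sat_body J B" using assms(6) unfolding S_def by auto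
  have xJ: "x \<in> J" using JS(2) assms(5) unfolding sat_body_def by force
  have noPos: "EPos x \<notin> B" using assms(2) assms(4) unfolding body_var_def by blast
  have noNot: "ENot x \<notin> B" using JS(2) xJ unfolding sat_body_def by force
  have cP: "closed_prog K (reduct P I) \<longleftrightarrow> closed_prog K (reduct R I) \<and>
      (sat_body K (reduct_elem I ` B) \<longrightarrow> x \<in> K)" for K I
    unfolding L1 R_def
  proof (intro iffI conjI allI impI)
    fix h C
    assume H: "\<forall>h C. (h, C) \<in> P \<longrightarrow> sat_body K (reduct_elem I ` C) \<longrightarrow> sat_head K h"
    { assume "(h, C) \<in> P - {(HVar x, B)}" "sat_body K (reduct_elem I ` C)"
      thus "sat_head K h" using H by blast }
    { assume "sat_body K (reduct_elem I ` B)"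
      thus "x \<in> K" using H assms(4) by fastforce }
  next
    fix h C
    assume H: "(\<forall>h C. (h, C) \<in> P - {(HVar x, B)} \<longrightarrow> sat_body K (reduct_elem I ` C) \<longrightarrow> sat_head K h) \<and>
      (sat_body K (reduct_elem I ` B) \<longrightarrow> x \<in> K)" "(h, C) \<in> P" "sat_body K (reduct_elem I ` C)"
    show "sat_head K h"
    proof (cases "(h, C) = (HVar x, B)")
      case True thus ?thesis using H by auto
    next
      case False thus ?thesis using H by blast
    qed
  qed
  have cP': "closed_prog K (reduct P' I) \<longleftrightarrow> closed_prog K (reduct R I) \<and>
      (sat_body K (reduct_elem I ` B') \<longrightarrow> x \<in> K)" for K I
    unfolding L1 R_def P'_def by auto
  have key: "is_answer_set P I \<longleftrightarrow> is_answer_set P' I" for I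
  proof (cases "x \<in> I")
    case True
    have "reduct_elem I ` B = insert ETop (reduct_elem I ` B')"
      using True assms(5) unfolding B'_def by (auto intro: rev_image_eqI[of "ENotNot x"])
    hence "sat_body K (reduct_elem I ` B) = sat_body K (reduct_elem I ` B')" for K
      unfolding sat_body_def by auto
    hence "closed_prog K (reduct P I) = closed_prog K (reduct P' I)" for K
      using cP cP' by simp
    thus ?thesis unfolding is_answer_set_def by simp
  next
    case False
    have "EBot \<in> reduct_elem I ` B" using False assms(5) by force
    hence nb: "\<not> sat_body K (reduct_elem I ` B)" for K unfolding sat_body_def by force
    show ?thesis
    proof
      assume A: "is_answer_set P I"
      hence "I \<in> PARITY n" using AnsP Ans_def by blast
      hence I1: "I \<subseteq> {1..n}" "odd (card I)" unfolding PARITY_def by auto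
      have nsat: "\<not> sat_body I (reduct_elem I ` B')"
      proof
        assume "sat_body I (reduct_elem I ` B')"
        hence sB': "sat_body I B'" using L2 by blast
        have "sat_body (insert x I) B"
          unfolding sat_body_def
        proof
          fix e assume e: "e \<in> B"
          show "sat_elem (insert x I) e"
          proof (cases "e = ENotNot x")
            case True thus ?thesis by simp
          next
            case F: False
            hence "sat_elem I e" using sB' e unfolding sat_body_def B'_def by auto
            thus ?thesis using noPos noNot e by (cases e) auto
          qed
        qed
        hence "insert x I \<in> S n B" unfolding S_def using I1 xn by auto
        hence "insert x I = J" using assms(6) by auto
        hence "I = J - {x}" using False by auto
        moreover have "finite J" using JS(1) finite_subset by blast
        ultimately have "card I = card J - 1" using xJ by simp
        moreover have "card J > 0" using \<open>finite J\<close> xJ card_gt_0_iff by blast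
        ultimately show False using I1(2) assms(7) by simp
      qed
      show "is_answer_set P' I"
        unfolding is_answer_set_def
        using A nsat cP cP' nb unfolding is_answer_set_def by blast
    next
      assume A: "is_answer_set P' I"
      have cI: "closed_prog I (reduct P I)" using A cP cP' nb unfolding is_answer_set_def by blast
      have "I \<subseteq> K" if K: "closed_prog K (reduct P I)" for K
      proof -
        have "closed_prog (K \<inter> I) (reduct P I)" using cl_int K cI by blast
        hence "closed_prog (K \<inter> I) (reduct R I)" using cP by blast
        moreover have "\<not> sat_body (K \<inter> I) (reduct_elem I ` B')"
        proof
          assume "sat_body (K \<inter> I) (reduct_elem I ` B')"
          hence "sat_body I (reduct_elem I ` B')" using L3 inf_le2 by blast
          hence "x \<in> I" using A cP' unfolding is_answer_set_def by blast
          thus False using False by simp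
        qed
        ultimately have "closed_prog (K \<inter> I) (reduct P' I)" using cP' by blast
        hence "I \<subseteq> K \<inter> I" using A unfolding is_answer_set_def by blast
        thus ?thesis by blast
      qed
      thus "is_answer_set P I" using cI unfolding is_answer_set_def by blast
    qed
  qed
  have "Ans P' = Ans P" unfolding Ans_def using key by blast
  thus ?thesis using AnsP unfolding P'_def B'_def by simp
qed

end
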